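(* Let $(X,d)$ be a metric space, $f:X\to X$ a Borel measurable map and $\mu$ a Borel probability measure on $X$. Then $\mu$ is an expansive measure of $f$ (i.e., there is $\delta>0$ with $\mu(\Phi_\delta(x))=0$ for all $x\in X$) if and only if there is $\delta>0$ such that $\mu(\Phi_\delta(x))=0$ for $\mu$-almost every $x\in X$.
   Context: Here $\Phi_\delta(x)=\{y\in X: d(f^i(y),f^i(x))\le\delta \text{ for all } i\in\mathbb{N}\}$, $\mathbb{N}=\{0,1,2,\dots\}$. *)

theory Defs
  imports "HOL-Probability.Probability"
begin

definition dyn_ball :: "('a::metric_space \<Rightarrow> 'a) \<Rightarrow> real \<Rightarrow> 'a \<Rightarrow> 'a set" where
  "dyn_ball f \<delta> x = {y. \<forall>i::nat. dist ((f ^^ i) y) ((f ^^ i) x) \<le> \<delta>}"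

definition expansive_measure :: "('a::metric_space \<Rightarrow> 'a) \<Rightarrow> 'a measure \<Rightarrow> bool" where
  "expansive_measure f M \<longleftrightarrow> (\<exists>\<delta>>0. \<forall>x. emeasure M (dyn_ball f \<delta> x) = 0)"

end

theory Submission
  imports Defs
begin

lemma dyn_ball_meas:
  fixes f :: "'a::metric_space \<Rightarrow> 'a"
  assumes "f \<in> borel_measurable borel"
  shows "dyn_ball f d x \<in> sets borel"
proof -
  have eq: "dyn_ball f d x = (\<Inter>i. (f ^^ i) -` cball ((f ^^ i) x) d)"
    by (auto simp: dyn_ball_def dist_commute)
  have m: "\<And>i. (f ^^ i) \<in> borel_measurable borel"
    using assms by (intro measurable_compose_n)
  have "\<And>i. (f ^^ i) -` cball ((f ^^ i) x) d \<in> sets borel"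
  proof -
    fix i
    have "(f ^^ i) -` cball ((f ^^ i) x) d \<inter> space borel \<in> sets borel"
      using m[of i] by (intro measurable_sets) auto
    then show "(f ^^ i) -` cball ((f ^^ i) x) d \<in> sets borel" by simp
  qed
  then show ?thesis unfolding eq by auto
qed

theorem lemma2p3:
  fixes f :: "'a::metric_space \<Rightarrow> 'a" and M :: "'a measure"
  assumes "f \<in> borel_measurable borel"
    and "sets M = sets borel"
    and "prob_space M"
  shows "expansive_measure f M \<longleftrightarrow>
         (\<exists>\<delta>>0. AE x in M. emeasure M (dyn_ball f \<delta> x) = 0)"
proof
  assume "expansive_measure f M"
  then show "\<exists>\<delta>>0. AE x in M. emeasure M (dyn_ball f \<delta> x) = 0"
    unfolding expansive_measure_def by auto
next
  assume "\<exists>\<delta>>0. AE x in M. emeasure M (dyn_ball f \<delta> x) = 0"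
  then obtain d where d: "d > 0" and ae: "AE x in M. emeasure M (dyn_ball f d x) = 0" by auto
  have sp: "space M = UNIV" using sets_eq_imp_space_eq[OF assms(2)] by simp
  from ae obtain N where N: "{x \<in> space M. \<not> emeasure M (dyn_ball f d x) = 0} \<subseteq> N"
    and Nm: "N \<in> sets M" and N0: "emeasure M N = 0"
    by (auto elim!: AE_E)
  have "\<forall>x. emeasure M (dyn_ball f (d/2) x) = 0"
  proof
    fix x
    let ?A = "dyn_ball f (d/2) x"
    have Am: "?A \<in> sets M" using dyn_ball_meas[OF assms(1)] assms(2) by auto
    show "emeasure M ?A = 0"
    proof (cases "?A \<subseteq> N")
      case True
      then show ?thesis using emeasure_mono[OF True Nm] N0 by simp
    next
      case False
      then obtain y where y: "y \<in> ?A" "y \<notin> N" by auto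
      then have y0: "emeasure M (dyn_ball f d y) = 0" using N sp by auto
      have "?A \<subseteq> dyn_ball f d y"
      proof
        fix z assume z: "z \<in> ?A"
        show "z \<in> dyn_ball f d y" unfolding dyn_ball_def
        proof
          show "\<forall>i. dist ((f ^^ i) z) ((f ^^ i) y) \<le> d"
          proof
            fix i
            have "dist ((f ^^ i) z) ((f ^^ i) x) \<le> d/2" using z by (auto simp: dyn_ball_def)
            moreover have "dist ((f ^^ i) y) ((f ^^ i) x) \<le> d/2" using y by (auto simp: dyn_ball_def)
            ultimately show "dist ((f ^^ i) z) ((f ^^ i) y) \<le> d"
              using dist_triangle2[of "(f ^^ i) z" "(f ^^ i) y" "(f ^^ i) x"] by linarith
          qed
        qed
      qed
      moreover have "dyn_ball f d y \<in> sets M" using dyn_ball_meas[OF assms(1)] assms(2) by auto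
      ultimately show ?thesis using emeasure_mono y0 by (metis le_zero_eq)
    qed
  qed
  then show "expansive_measure f M" unfolding expansive_measure_def
    using d by (intro exI[of _ "d/2"]) auto
qed

end
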